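(* Let $s\ge1$ and let $f\in C^{s+1}(\mathbb{R}^s)$ satisfy $\|D^kf\|_\infty<\infty$ for $k=1,\dots,s+1$. Then for every $\theta\in\{0,1\}^s$, $$\lim_{n\to\infty}\sup_{\alpha\in\mathbb{Z}^s}\left|(-1)^{|\theta|}\,2^{(n+2)|\theta|+ns/2}\,d_{\theta,\alpha}^n(f)-\frac{D^\theta f\left(x_\alpha^n\right)}{\theta!}\right|=0.$$
   Context: Univariate Haar functions: $\psi_0:=\chi_{[0,1]}$ and $\psi_1:=\chi_{[0,\frac12]}-\chi_{[\frac12,1]}$. For $\theta\in\{0,1\}^s$ and $x\in\mathbb{R}^s$, $\psi_\theta(x):=\prod_{j=1}^s\psi_{\theta_j}(x_j)$. For $n\in\mathbb{N}_0$, $\alpha\in\mathbb{Z}^s$, $d_{\theta,\alpha}^n(f):=2^{ns/2}\int_{\mathbb{R}^s}f(t)\,\psi_\theta(2^nt-\alpha)\,dt$. Let $\epsilon:=(1,\dots,1)$ and $x_\alpha^n:=2^{-n}(\alpha+\frac12\epsilon)$. For $k\in\mathbb{N}$, $\|D^kf\|_\infty:=\sup_{x\in\mathbb{R}^s}\max_{|\gamma|=k}\left|\frac{D^\gamma f(x)}{\gamma!}\right|$ (maximum over multi-indices $\gamma\in\mathbb{N}_0^s$). Multi-index notation: $|\theta|=\sum_j\theta_j$, $\theta!=\prod_j\theta_j!$. *)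

theory Defs
  imports "HOL-Analysis.Analysis" "HOL-Library.Multiset"
begin

definition partial :: "'n::finite \<Rightarrow> (real^'n \<Rightarrow> real) \<Rightarrow> real^'n \<Rightarrow> real" where
  "partial i g x = deriv (\<lambda>t. g (x + t *\<^sub>R axis i 1)) 0"

text \<open>Iterated partial derivative along a list of coordinates (innermost = last).\<close>
fun pderiv_list :: "'n::finite list \<Rightarrow> (real^'n \<Rightarrow> real) \<Rightarrow> real^'n \<Rightarrow> real" where
  "pderiv_list [] g = g"
| "pderiv_list (i # is) g = partial i (pderiv_list is g)"

definition Ck :: "nat \<Rightarrow> (real^'n::finite \<Rightarrow> real) \<Rightarrow> bool" where
  "Ck k g \<longleftrightarrow>
     (\<forall>is. length is < k \<longrightarrow> (\<forall>i x. (\<lambda>t. pderiv_list is g (x + t *\<^sub>R axis i 1)) differentiable (at 0)))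
   \<and> (\<forall>is. length is \<le> k \<longrightarrow> continuous_on UNIV (pderiv_list is g))"

definition Dmulti :: "('n::finite \<Rightarrow> nat) \<Rightarrow> (real^'n \<Rightarrow> real) \<Rightarrow> real^'n \<Rightarrow> real" where
  "Dmulti \<gamma> g = pderiv_list (SOME xs. \<forall>i. count (mset xs) i = \<gamma> i) g"

definition mi_abs :: "('n::finite \<Rightarrow> nat) \<Rightarrow> nat" where
  "mi_abs \<gamma> = (\<Sum>j\<in>UNIV. \<gamma> j)"

definition mi_fact :: "('n::finite \<Rightarrow> nat) \<Rightarrow> nat" where
  "mi_fact \<gamma> = (\<Prod>j\<in>UNIV. fact (\<gamma> j))"

definition Dk_bounded :: "nat \<Rightarrow> (real^'n::finite \<Rightarrow> real) \<Rightarrow> bool" where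
  "Dk_bounded k g \<longleftrightarrow> (\<exists>B. \<forall>x \<gamma>. mi_abs \<gamma> = k \<longrightarrow> \<bar>Dmulti \<gamma> g x / real (mi_fact \<gamma>)\<bar> \<le> B)"

definition psi0 :: "real \<Rightarrow> real" where
  "psi0 t = indicator {0..1} t"

definition psi1 :: "real \<Rightarrow> real" where
  "psi1 t = indicator {0..1/2} t - indicator {1/2..1} t"

definition psi :: "('n::finite \<Rightarrow> nat) \<Rightarrow> real^'n \<Rightarrow> real" where
  "psi \<theta> x = (\<Prod>j\<in>UNIV. (if \<theta> j = 0 then psi0 (x $ j) else psi1 (x $ j)))"

definition haar_coeff :: "('n::finite \<Rightarrow> nat) \<Rightarrow> nat \<Rightarrow> ('n \<Rightarrow> int) \<Rightarrow> (real^'n \<Rightarrow> real) \<Rightarrow> real" where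
  "haar_coeff \<theta> n \<alpha> g = 2 powr (real n * real CARD('n) / 2) *
     integral UNIV (\<lambda>t. g t * psi \<theta> (\<chi> j. 2 ^ n * t $ j - real_of_int (\<alpha> j)))"

definition center :: "nat \<Rightarrow> ('n::finite \<Rightarrow> int) \<Rightarrow> real^'n" where
  "center n \<alpha> = (\<chi> j. (real_of_int (\<alpha> j) + 1/2) / 2 ^ n)"

end

theory Submission
  imports Defs
begin


fun Dl :: "real \<Rightarrow> 'n::finite list \<Rightarrow> (real^'n \<Rightarrow> real) \<Rightarrow> real^'n \<Rightarrow> real" where
  "Dl h [] g = g"
| "Dl h (j # js) g = (\<lambda>t. Dl h js g (t + h *\<^sub>R axis j 1) - Dl h js g t)"

lemma Dl_swap: "Dl h (a # b # r) g = Dl h (b # a # r) g"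
  by (rule ext) (simp add: algebra_simps)

lemma Dl_remove1: "d \<in> set ds \<Longrightarrow> Dl h ds g = Dl h (d # remove1 d ds) g"
proof (induction ds)
  case Nil then show ?case by simp
next
  case (Cons e r)
  show ?case
  proof (cases "d = e")
    case True then show ?thesis by simp
  next
    case False
    then have "d \<in> set r" using Cons by simp
    then have "Dl h r g = Dl h (d # remove1 d r) g" using Cons by simp
    then have "Dl h (e # r) g = Dl h (e # d # remove1 d r) g" by simp
    also have "\<dots> = Dl h (d # e # remove1 d r) g" by (rule Dl_swap)
    finally show ?thesis using False by simp
  qed
qed

lemma Dl_mset: "mset xs = mset ys \<Longrightarrow> Dl h xs g = Dl h ys g"
proof (induction xs arbitrary: ys g)
  case Nil then show ?case by simp
next
  case (Cons a r)
  have a: "a \<in> set ys" by (metis Cons.prems list.set_intros(1) set_mset_mset)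
  have "mset r = mset (remove1 a ys)" by (simp flip: Cons.prems)
  then have "\<And>g. Dl h r g = Dl h (remove1 a ys) g" using Cons.IH by blast
  then have "Dl h (a # r) g = Dl h (a # remove1 a ys) g" by simp
  also have "\<dots> = Dl h ys g" using Dl_remove1[OF a] by simp
  finally show ?case .
qed

lemma pderiv_list_append: "pderiv_list is (partial j g) = pderiv_list (is @ [j]) g"
  by (induction "is") auto

lemma DIR:
  assumes "\<And>x. (\<lambda>t. g (x + t *\<^sub>R axis i 1)) differentiable (at 0)"
  shows "((\<lambda>t. g (x + t *\<^sub>R axis i 1)) has_real_derivative partial i g (x + t0 *\<^sub>R axis i 1)) (at t0)"
proof -
  let ?x = "x + t0 *\<^sub>R axis i 1"
  have "((\<lambda>t. g (?x + t *\<^sub>R axis i 1)) has_real_derivative partial i g ?x) (at 0)"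
    unfolding partial_def using assms[of ?x] DERIV_deriv_iff_real_differentiable by blast
  then have "((\<lambda>t. g (?x + (t - t0) *\<^sub>R axis i 1)) has_real_derivative partial i g ?x) (at (0 + t0))"
    using DERIV_shift[of "\<lambda>t. g (?x + (t - t0) *\<^sub>R axis i 1)" "partial i g ?x" 0 t0] by simp
  moreover have "(\<lambda>t. g (?x + (t - t0) *\<^sub>R axis i 1)) = (\<lambda>t. g (x + t *\<^sub>R axis i 1))"
    by (rule ext) (simp add: algebra_simps)
  ultimately show ?thesis by simp
qed

lemma DDER:
  assumes "\<And>x. (\<lambda>t. g (x + t *\<^sub>R axis i 1)) differentiable (at 0)"
  shows "((\<lambda>t. Dl h r g (x + t *\<^sub>R axis i 1)) has_real_derivative Dl h r (partial i g) (x + t0 *\<^sub>R axis i 1)) (at t0)"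
proof (induction r arbitrary: x)
  case Nil then show ?case using DIR[OF assms] by simp
next
  case (Cons k r)
  have e: "\<And>t. x + t *\<^sub>R axis i 1 + h *\<^sub>R axis k 1 = (x + h *\<^sub>R axis k 1) + t *\<^sub>R axis i 1"
    by (simp add: algebra_simps)
  show ?case
    using DERIV_diff[OF Cons.IH[of "x + h *\<^sub>R axis k 1"] Cons.IH[of x]] by (simp add: e)
qed

definition Hd :: "nat \<Rightarrow> (real^'n::finite \<Rightarrow> real) \<Rightarrow> bool" where
  "Hd L g \<longleftrightarrow> (\<forall>is. length is < L \<longrightarrow> (\<forall>i x. (\<lambda>t. pderiv_list is g (x + t *\<^sub>R axis i 1)) differentiable (at 0)))"

lemma Hd_partial: "Hd (Suc L) g \<Longrightarrow> Hd L (partial j g)"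
  unfolding Hd_def by (simp add: pderiv_list_append)

lemma Hd_0: "Hd (Suc L) g \<Longrightarrow> (\<lambda>t. g (x + t *\<^sub>R axis i 1)) differentiable (at 0)"
  unfolding Hd_def by (metis pderiv_list.simps(1) list.size(3) zero_less_Suc)

lemma Dl_mvt:
  assumes "Hd (length js) g" and "h \<ge> 0"
  shows "\<exists>\<xi>. Dl h js g t = h ^ length js * pderiv_list (rev js) g \<xi> \<and> norm (\<xi> - t) \<le> real (length js) * h"
  using assms(1)
proof (induction js arbitrary: g t)
  case Nil then show ?case by (intro exI[of _ t]) simp
next
  case (Cons j r)
  show ?case
  proof (cases "h = 0")
    case True then show ?thesis by (intro exI[of _ t]) simp
  next
    case False
    then have hp: "h > 0" using assms(2) by simp
    have d0: "\<And>x. (\<lambda>t. g (x + t *\<^sub>R axis j 1)) differentiable (at 0)"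
      using Hd_0 Cons.prems by simp
    let ?G = "\<lambda>\<tau>. Dl h r g (t + \<tau> *\<^sub>R axis j 1)"
    let ?G' = "\<lambda>\<tau>. Dl h r (partial j g) (t + \<tau> *\<^sub>R axis j 1)"
    have "\<And>\<tau>. 0 \<le> \<tau> \<Longrightarrow> \<tau> \<le> h \<Longrightarrow> (?G has_real_derivative ?G' \<tau>) (at \<tau>)"
      using DDER[OF d0] by blast
    from MVT2[OF hp this] obtain z where z: "0 < z" "z < h" "?G h - ?G 0 = (h - 0) * ?G' z" by blast
    have Hp: "Hd (length r) (partial j g)" using Hd_partial Cons.prems by simp
    from Cons.IH[OF Hp, of "t + z *\<^sub>R axis j 1"] obtain \<xi> where
      xi: "?G' z = h ^ length r * pderiv_list (rev r) (partial j g) \<xi>"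
          "norm (\<xi> - (t + z *\<^sub>R axis j 1)) \<le> real (length r) * h" by blast
    have "Dl h (j # r) g t = ?G h - ?G 0" by simp
    also have "\<dots> = h ^ length (j # r) * pderiv_list (rev (j # r)) g \<xi>"
      using z(3) xi(1) by (simp add: pderiv_list_append)
    finally have 1: "Dl h (j # r) g t = h ^ length (j # r) * pderiv_list (rev (j # r)) g \<xi>" .
    have "norm (\<xi> - t) \<le> norm (\<xi> - (t + z *\<^sub>R axis j 1)) + norm (z *\<^sub>R axis j (1::real))"
      by (metis diff_diff_eq2 diff_add_cancel norm_triangle_ineq add.commute)
    also have "\<dots> \<le> real (length r) * h + h" using xi(2) z by (simp add: norm_axis_1)
    finally have 2: "norm (\<xi> - t) \<le> real (length (j # r)) * h" by (simp add: algebra_simps)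
    show ?thesis using 1 2 by blast
  qed
qed

lemma Ck_Hd: "Ck K f \<Longrightarrow> L \<le> K \<Longrightarrow> Hd L f"
  unfolding Ck_def Hd_def by auto

lemma clairaut:
  assumes ck: "Ck K f" and len: "length xs \<le> K" and ms: "mset xs = mset ys"
  shows "pderiv_list xs f = pderiv_list ys f"
proof
  fix x
  define L where "L = length xs"
  have Ly: "length ys = L" unfolding L_def using ms by (metis size_mset)
  have H: "Hd L f" using Ck_Hd[OF ck] len L_def by simp
  define hh where "hh = (\<lambda>N::nat. inverse (real (Suc N)))"
  have hpos: "\<And>N. hh N > 0" unfolding hh_def by simp
  have "\<forall>N. \<exists>\<xi>. Dl (hh N) (rev xs) f x = hh N ^ L * pderiv_list xs f \<xi> \<and> norm (\<xi> - x) \<le> real L * hh N"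
    using Dl_mvt[of "rev xs" f "hh _" x] H hpos L_def by (simp add: less_imp_le)
  then obtain \<xi> where xi: "\<And>N. Dl (hh N) (rev xs) f x = hh N ^ L * pderiv_list xs f (\<xi> N)"
     "\<And>N. norm (\<xi> N - x) \<le> real L * hh N" by metis
  have "\<forall>N. \<exists>\<xi>. Dl (hh N) (rev ys) f x = hh N ^ L * pderiv_list ys f \<xi> \<and> norm (\<xi> - x) \<le> real L * hh N"
    using Dl_mvt[of "rev ys" f "hh _" x] H hpos Ly by (simp add: less_imp_le)
  then obtain \<eta> where eta: "\<And>N. Dl (hh N) (rev ys) f x = hh N ^ L * pderiv_list ys f (\<eta> N)"
     "\<And>N. norm (\<eta> N - x) \<le> real L * hh N" by metis
  have eq: "\<And>N. pderiv_list xs f (\<xi> N) = pderiv_list ys f (\<eta> N)"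
  proof -
    fix N
    have "Dl (hh N) (rev xs) f = Dl (hh N) (rev ys) f" by (rule Dl_mset) (simp add: ms)
    then have "hh N ^ L * pderiv_list xs f (\<xi> N) = hh N ^ L * pderiv_list ys f (\<eta> N)"
      using xi(1) eta(1) by metis
    then show "pderiv_list xs f (\<xi> N) = pderiv_list ys f (\<eta> N)" using hpos[of N] by simp
  qed
  have hz: "(\<lambda>N. real L * hh N) \<longlonglongrightarrow> 0"
    unfolding hh_def by (intro tendsto_mult_right_zero LIMSEQ_inverse_real_of_nat)
  have conv: "(\<lambda>N. z N) \<longlonglongrightarrow> x" if "\<And>N. norm (z N - x) \<le> real L * hh N" for z
  proof -
    have "(\<lambda>N. z N - x) \<longlonglongrightarrow> 0"
      by (rule Lim_null_comparison[OF _ hz]) (simp add: that)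
    then have "(\<lambda>N. (z N - x) + x) \<longlonglongrightarrow> 0 + x" by (intro tendsto_add) auto
    then show ?thesis by simp
  qed
  have cx: "continuous_on UNIV (pderiv_list xs f)" using ck len by (auto simp: Ck_def)
  have cy: "continuous_on UNIV (pderiv_list ys f)" using ck len Ly L_def by (auto simp: Ck_def)
  have c1: "(\<lambda>N. pderiv_list xs f (\<xi> N)) \<longlonglongrightarrow> pderiv_list xs f x"
    by (rule continuous_on_tendsto_compose[OF cx conv[OF xi(2)]]) auto
  have c2: "(\<lambda>N. pderiv_list ys f (\<eta> N)) \<longlonglongrightarrow> pderiv_list ys f x"
    by (rule continuous_on_tendsto_compose[OF cy conv[OF eta(2)]]) auto
  show "pderiv_list xs f x = pderiv_list ys f x"
    using LIMSEQ_unique[OF c1] c2 eq by simp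
qed



lemma mvt_bound1:
  assumes d: "\<And>\<tau>. (G has_real_derivative G' \<tau>) (at \<tau>)" and b: "\<And>\<tau>. \<bar>G' \<tau>\<bar> \<le> B"
  shows "\<bar>G a - G 0\<bar> \<le> B * \<bar>a\<bar>"
proof -
  consider "a > 0" | "a = 0" | "a < 0" by linarith
  then show ?thesis
  proof cases
    case 1
    from MVT2[OF 1, of G G'] d obtain z where "G a - G 0 = (a - 0) * G' z" by blast
    then show ?thesis using b[of z] 1 by (simp add: abs_mult mult.commute mult_left_mono)
  next
    case 2 then show ?thesis by simp
  next
    case 3
    from MVT2[OF 3, of G G'] d obtain z where "G 0 - G a = (0 - a) * G' z" by blast
    then have "\<bar>G a - G 0\<bar> = \<bar>a\<bar> * \<bar>G' z\<bar>" using 3 by (simp add: abs_mult abs_minus_commute)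
    then show ?thesis using b[of z] mult_right_mono[of "\<bar>G' z\<bar>" B "\<bar>a\<bar>"] by (simp add: mult.commute)
  qed
qed

lemma lip_coord:
  fixes P :: "real^'n::finite \<Rightarrow> real"
  assumes d: "\<And>x i. (\<lambda>t. P (x + t *\<^sub>R axis i 1)) differentiable (at 0)"
    and b: "\<And>i x. \<bar>partial i P x\<bar> \<le> Bd i"
  shows "\<bar>P x - P y\<bar> \<le> (\<Sum>i\<in>UNIV. Bd i * \<bar>x$i - y$i\<bar>)"
proof -
  have "\<forall>x y. (\<forall>k. k \<notin> S \<longrightarrow> x$k = y$k) \<longrightarrow> \<bar>P x - P y\<bar> \<le> (\<Sum>i\<in>S. Bd i * \<bar>x$i - y$i\<bar>)"
    if "finite S" for S :: "'n set"
    using that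
  proof (induction S rule: finite_induct)
    case empty
    show ?case
    proof (intro allI impI)
      fix x y :: "real^'n"
      assume "\<forall>k. k \<notin> {} \<longrightarrow> x$k = y$k"
      then have "x = y" by (simp add: vec_eq_iff)
      then show "\<bar>P x - P y\<bar> \<le> (\<Sum>i\<in>{}. Bd i * \<bar>x$i - y$i\<bar>)" by simp
    qed
  next
    case (insert i S)
    show ?case
    proof (intro allI impI)
      fix x y :: "real^'n"
      assume agree: "\<forall>k. k \<notin> insert i S \<longrightarrow> x$k = y$k"
      define z where "z = x + (y$i - x$i) *\<^sub>R axis i 1"
      have zc: "z$k = (if k = i then y$i else x$k)" for k
        unfolding z_def by (simp add: axis_def)
      have 1: "\<bar>P (x + (y$i - x$i) *\<^sub>R axis i 1) - P (x + 0 *\<^sub>R axis i 1)\<bar> \<le> Bd i * \<bar>y$i - x$i\<bar>"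
        using mvt_bound1[of "\<lambda>t. P (x + t *\<^sub>R axis i 1)" "\<lambda>t. partial i P (x + t *\<^sub>R axis i 1)", OF DIR[OF d] b] by simp
      have "\<forall>k. k \<notin> S \<longrightarrow> z$k = y$k" using agree zc by auto
      then have 2: "\<bar>P z - P y\<bar> \<le> (\<Sum>k\<in>S. Bd k * \<bar>z$k - y$k\<bar>)" using insert.IH by blast
      have "(\<Sum>k\<in>S. Bd k * \<bar>z$k - y$k\<bar>) = (\<Sum>k\<in>S. Bd k * \<bar>x$k - y$k\<bar>)"
        using insert.hyps(2) zc by (intro sum.cong) auto
      then have "\<bar>P x - P y\<bar> \<le> Bd i * \<bar>x$i - y$i\<bar> + (\<Sum>k\<in>S. Bd k * \<bar>x$k - y$k\<bar>)"
        using 1 2 unfolding z_def by (simp add: abs_minus_commute)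
      then show "\<bar>P x - P y\<bar> \<le> (\<Sum>k\<in>insert i S. Bd k * \<bar>x$k - y$k\<bar>)"
        using insert.hyps by simp
    qed
  qed
  then show ?thesis by auto
qed

lemma Dl_closed:
  assumes "distinct js"
  shows "(\<Sum>B\<in>Pow (set js). (-1) ^ card B * g (t + h *\<^sub>R (\<Sum>j\<in>B. axis j 1))) = (-1) ^ length js * Dl h js g t"
  using assms
proof (induction js arbitrary: t)
  case Nil then show ?case by simp
next
  case (Cons j r)
  let ?A = "set r"
  have jA: "j \<notin> ?A" using Cons.prems by simp
  let ?E = "\<lambda>t. (\<Sum>B\<in>Pow ?A. (-1) ^ card B * g (t + h *\<^sub>R (\<Sum>j\<in>B. axis j 1)))"
  have inj: "inj_on (insert j) (Pow ?A)"
    using jA by (auto simp: inj_on_def)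
  have disj: "Pow ?A \<inter> insert j ` Pow ?A = {}" using jA by auto
  have "(\<Sum>B\<in>Pow (set (j # r)). (-1) ^ card B * g (t + h *\<^sub>R (\<Sum>j\<in>B. axis j 1)))
      = ?E t + (\<Sum>B\<in>insert j ` Pow ?A. (-1) ^ card B * g (t + h *\<^sub>R (\<Sum>j\<in>B. axis j 1)))"
    by (simp add: Pow_insert sum.union_disjoint disj)
  also have "(\<Sum>B\<in>insert j ` Pow ?A. (-1) ^ card B * g (t + h *\<^sub>R (\<Sum>j\<in>B. axis j 1)))
      = (\<Sum>B\<in>Pow ?A. (-1) ^ card (insert j B) * g (t + h *\<^sub>R (\<Sum>j\<in>insert j B. axis j 1)))"
    by (simp add: sum.reindex[OF inj])
  also have "\<dots> = - ?E (t + h *\<^sub>R axis j 1)"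
  proof -
    have "\<And>B. B \<in> Pow ?A \<Longrightarrow> (-1) ^ card (insert j B) * g (t + h *\<^sub>R (\<Sum>j\<in>insert j B. axis j 1))
        = - ((-1) ^ card B * g ((t + h *\<^sub>R axis j 1) + h *\<^sub>R (\<Sum>j\<in>B. axis j 1)))"
    proof -
      fix B assume B: "B \<in> Pow ?A"
      then have fB: "finite B" by (meson PowD finite_set finite_subset)
      have jB: "j \<notin> B" using B jA by auto
      show "?thesis B" using fB jB by (simp add: algebra_simps)
    qed
    then show ?thesis by (simp add: sum_negf)
  qed
  finally have eq: "(\<Sum>B\<in>Pow (set (j # r)). (-1) ^ card B * g (t + h *\<^sub>R (\<Sum>j\<in>B. axis j 1)))
     = ?E t + - ?E (t + h *\<^sub>R axis j 1)" .
  have d: "distinct r" using Cons.prems by simp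
  have e1: "?E t = (-1) ^ length r * Dl h r g t" using Cons.IH[OF d] by blast
  have e2: "?E (t + h *\<^sub>R axis j 1) = (-1) ^ length r * Dl h r g (t + h *\<^sub>R axis j 1)"
    using Cons.IH[OF d] by blast
  show ?case unfolding eq e1 e2 by (simp add: algebra_simps)
qed



definition lo :: "nat \<Rightarrow> ('n::finite \<Rightarrow> int) \<Rightarrow> real^'n" where
  "lo n \<alpha> = (\<chi> j. real_of_int (\<alpha> j) / 2 ^ n)"
definition hh :: "nat \<Rightarrow> real" where "hh n = 1 / 2 ^ Suc n"
definition wd :: "('n::finite \<Rightarrow> nat) \<Rightarrow> nat \<Rightarrow> real^'n" where
  "wd \<theta> n = (\<chi> j. if \<theta> j = 0 then 2 * hh n else hh n)"
definition vB :: "nat \<Rightarrow> 'n::finite set \<Rightarrow> real^'n" where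
  "vB n B = hh n *\<^sub>R (\<Sum>j\<in>B. axis j 1)"

lemma vB_nth: "vB n B $ k = (if k \<in> B then hh n else 0)"
proof -
  have "(\<Sum>j\<in>B. axis j (1::real)) $ k = (\<Sum>j\<in>B. axis j (1::real) $ k)" by (simp add: sum_component)
  also have "\<dots> = (\<Sum>j\<in>B. if k = j then 1 else 0)" by (intro sum.cong) (auto simp: axis_def)
  also have "\<dots> = (if k \<in> B then 1 else 0)" by (simp add: sum.delta)
  finally show ?thesis unfolding vB_def by simp
qed

lemma prod_ind:
  "(\<Prod>k\<in>UNIV. if c$k \<le> t$k \<and> t$k \<le> d$k then 1 else (0::real)) = indicator (cbox c d) (t::real^'n::finite)"
proof (cases "t \<in> cbox c d")
  case True then show ?thesis by (simp add: mem_box_cart)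
next
  case False
  then obtain k where "\<not> (c$k \<le> t$k \<and> t$k \<le> d$k)" by (auto simp: mem_box_cart)
  then show ?thesis using False by (intro trans[OF prod_zero]) auto
qed

lemma psi_decomp:
  fixes \<theta> :: "'n::finite \<Rightarrow> nat"
  assumes th: "\<And>j. \<theta> j \<le> 1"
  shows "psi \<theta> (\<chi> j. 2 ^ n * t $ j - real_of_int (\<alpha> j)) =
    (\<Sum>B\<in>Pow {j. \<theta> j \<noteq> 0}. (-1) ^ card B * indicator (cbox (lo n \<alpha> + vB n B) (lo n \<alpha> + wd \<theta> n + vB n B)) t)"
proof -
  define l where "l j = real_of_int (\<alpha> j) / 2 ^ n" for j
  define e where "e = hh n"
  have e2: "2 * e = 1 / 2 ^ n" unfolding e_def hh_def by simp
  have pos: "(0::real) < 2 ^ n" by simp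
  have c1: "(2 ^ n * x - a \<in> {0..1}) = (a / 2 ^ n \<le> x \<and> x \<le> a / 2 ^ n + 2 * e)" for x a :: real
    using pos unfolding e2 by (auto simp: field_simps)
  have c2: "(2 ^ n * x - a \<in> {0..1/2}) = (a / 2 ^ n \<le> x \<and> x \<le> a / 2 ^ n + e)" for x a :: real
    using pos unfolding e_def hh_def by (auto simp: field_simps)
  have c3: "(2 ^ n * x - a \<in> {1/2..1}) = (a / 2 ^ n + e \<le> x \<and> x \<le> a / 2 ^ n + 2 * e)" for x a :: real
    using pos unfolding e_def hh_def by (auto simp: field_simps)
  define Q where "Q k = (if l k \<le> t$k \<and> t$k \<le> l k + (if \<theta> k = 0 then 2 * e else e) then 1 else (0::real))" for k
  define I1 where "I1 k = (if l k + e \<le> t$k \<and> t$k \<le> l k + 2 * e then 1 else (0::real))" for k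
  define R where "R k = (if \<theta> k = 0 then 0 else - I1 k)" for k
  define J where "J = {j. \<theta> j \<noteq> 0}"
  have fac: "(if \<theta> k = 0 then psi0 (2 ^ n * t $ k - real_of_int (\<alpha> k)) else psi1 (2 ^ n * t $ k - real_of_int (\<alpha> k)))
       = R k + Q k" for k
    unfolding R_def Q_def I1_def psi0_def psi1_def indicator_def l_def
    by (simp only: c1 c2 c3) auto
  have "psi \<theta> (\<chi> j. 2 ^ n * t $ j - real_of_int (\<alpha> j)) = (\<Prod>k\<in>UNIV. R k + Q k)"
    unfolding psi_def vec_lambda_beta fac by (rule refl)
  also have "\<dots> = (\<Sum>X\<in>Pow UNIV. (\<Prod>k\<in>X. R k) * (\<Prod>k\<in>UNIV - X. Q k))"
    by (rule prod_add) simp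
  also have "\<dots> = (\<Sum>X\<in>Pow J. (\<Prod>k\<in>X. R k) * (\<Prod>k\<in>UNIV - X. Q k))"
  proof (rule sum.mono_neutral_right)
    show "finite (Pow (UNIV::'n set))" by simp
    show "Pow J \<subseteq> Pow UNIV" by simp
    show "\<forall>X\<in>Pow UNIV - Pow J. (\<Prod>k\<in>X. R k) * (\<Prod>k\<in>UNIV - X. Q k) = 0"
    proof
      fix X assume "X \<in> Pow (UNIV::'n set) - Pow J"
      then obtain k where "k \<in> X" "\<theta> k = 0" unfolding J_def by auto
      then have "(\<Prod>k\<in>X. R k) = 0" using prod_zero[of X R] by (metis R_def finite)
      then show "(\<Prod>k\<in>X. R k) * (\<Prod>k\<in>UNIV - X. Q k) = 0" by simp
    qed
  qed
  also have "\<dots> = (\<Sum>X\<in>Pow J. (-1) ^ card X * indicator (cbox (lo n \<alpha> + vB n X) (lo n \<alpha> + wd \<theta> n + vB n X)) t)"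
  proof (rule sum.cong[OF refl])
    fix X assume X: "X \<in> Pow J"
    have "(\<Prod>k\<in>X. R k) = (\<Prod>k\<in>X. (-1) * I1 k)"
      using X by (intro prod.cong) (auto simp: R_def J_def)
    also have "\<dots> = (-1) ^ card X * (\<Prod>k\<in>X. I1 k)"
      unfolding prod.distrib prod_constant by (rule refl)
    finally have 1: "(\<Prod>k\<in>X. R k) = (-1) ^ card X * (\<Prod>k\<in>X. I1 k)" .
    have 2: "(\<Prod>k\<in>UNIV. if k \<in> X then I1 k else Q k) = (\<Prod>k\<in>X. I1 k) * (\<Prod>k\<in>UNIV - X. Q k)"
      by (simp add: prod.If_cases Compl_eq_Diff_UNIV)
    have 3: "(\<Prod>k\<in>UNIV. if k \<in> X then I1 k else Q k) =
        indicator (cbox (lo n \<alpha> + vB n X) (lo n \<alpha> + wd \<theta> n + vB n X)) t"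
      unfolding prod_ind[symmetric]
      using X by (intro prod.cong) (auto simp: I1_def Q_def vB_nth lo_def wd_def l_def e_def J_def)
    show "(\<Prod>k\<in>X. R k) * (\<Prod>k\<in>UNIV - X. Q k) =
       (-1) ^ card X * indicator (cbox (lo n \<alpha> + vB n X) (lo n \<alpha> + wd \<theta> n + vB n X)) t"
      using 1 2 3 by simp
  qed
  finally show ?thesis unfolding J_def .
qed

lemma integral_shift:
  fixes f :: "real^'n::finite \<Rightarrow> real"
  assumes cont: "continuous_on UNIV f"
  shows "integral (cbox (a + v) (b + v)) f = integral (cbox a b) (\<lambda>t. f (t + v))"
proof -
  have "f integrable_on cbox (a + v) (b + v)"
    by (rule integrable_continuous) (rule continuous_on_subset[OF cont], simp)
  then have "(f has_integral integral (cbox (a + v) (b + v)) f) (cbox (a + v) (b + v))"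
    by (rule integrable_integral)
  from has_integral_affinity'[OF this, of 1 v]
  have "((\<lambda>t. f (t + v)) has_integral integral (cbox (a + v) (b + v)) f) (cbox a b)" by simp
  then show ?thesis by (rule integral_unique[symmetric])
qed

lemma haar_decomp:
  fixes f :: "real^'n::finite \<Rightarrow> real" and \<theta> :: "'n \<Rightarrow> nat"
  assumes th: "\<And>j. \<theta> j \<le> 1" and cont: "continuous_on UNIV f"
    and js: "distinct js" "set js = {j. \<theta> j \<noteq> 0}"
  shows "integral UNIV (\<lambda>t. f t * psi \<theta> (\<chi> j. 2 ^ n * t $ j - real_of_int (\<alpha> j)))
     = (-1) ^ length js * integral (cbox (lo n \<alpha>) (lo n \<alpha> + wd \<theta> n)) (Dl (hh n) js f)"
proof -
  define J where "J = {j. \<theta> j \<noteq> 0}"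
  define a where "a = lo n \<alpha>"
  define b where "b = lo n \<alpha> + wd \<theta> n"
  define bx where "bx X = cbox (a + vB n X) (b + vB n X)" for X
  have int1: "f integrable_on bx X" for X
    unfolding bx_def by (rule integrable_continuous) (rule continuous_on_subset[OF cont], simp)
  have int1': "(\<lambda>t. if t \<in> bx X then f t else 0) integrable_on UNIV" for X
    using int1 integrable_restrict_UNIV by blast
  have contv: "continuous_on UNIV (\<lambda>t. f (t + v))" for v
    by (rule continuous_on_compose2[OF cont]) (auto intro!: continuous_intros)
  have int2: "(\<lambda>t. f (t + v)) integrable_on cbox a b" for v
    by (rule integrable_continuous) (rule continuous_on_subset[OF contv], simp)
  have "integral UNIV (\<lambda>t. f t * psi \<theta> (\<chi> j. 2 ^ n * t $ j - real_of_int (\<alpha> j)))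
      = integral UNIV (\<lambda>t. \<Sum>X\<in>Pow J. (-1) ^ card X * (if t \<in> bx X then f t else 0))"
    unfolding psi_decomp[OF th] J_def bx_def a_def b_def
    apply (intro arg_cong[where f="integral UNIV"] ext)
    apply (simp only: sum_distrib_left)
    apply (intro sum.cong refl)
    apply (simp add: indicator_def)
    done
  also have "\<dots> = (\<Sum>X\<in>Pow J. integral UNIV (\<lambda>t. (-1) ^ card X * (if t \<in> bx X then f t else 0)))"
    by (rule integral_sum) (auto intro!: integrable_on_cmult_left[of _ _ "(-1) ^ card _", simplified] int1')
  also have "\<dots> = (\<Sum>X\<in>Pow J. (-1) ^ card X * integral (cbox a b) (\<lambda>t. f (t + vB n X)))"
    unfolding integral_mult_right integral_restrict_UNIV bx_def integral_shift[OF cont] by (rule refl)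
  also have "\<dots> = (\<Sum>X\<in>Pow J. integral (cbox a b) (\<lambda>t. (-1) ^ card X * f (t + vB n X)))"
    by simp
  also have "\<dots> = integral (cbox a b) (\<lambda>t. \<Sum>X\<in>Pow J. (-1) ^ card X * f (t + vB n X))"
    by (rule integral_sum[symmetric]) (auto intro!: integrable_on_cmult_left[of _ _ "(-1) ^ card _", simplified] int2)
  also have "\<dots> = integral (cbox a b) (\<lambda>t. (-1) ^ length js * Dl (hh n) js f t)"
    using Dl_closed[OF js(1), of f _ "hh n"] js(2) unfolding J_def vB_def by simp
  finally show ?thesis unfolding a_def b_def by simp
qed



lemma ex_list: "\<exists>xs. \<forall>i. count (mset xs) i = (\<gamma> :: 'n::finite \<Rightarrow> nat) i"
proof -
  have c: "count (Abs_multiset \<gamma>) = \<gamma>" by (rule count_Abs_multiset) simp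
  obtain xs where "mset xs = Abs_multiset \<gamma>" using ex_mset by blast
  then have "\<forall>i. count (mset xs) i = \<gamma> i" using c by simp
  then show ?thesis by blast
qed

lemma Dl_cont: "continuous_on UNIV g \<Longrightarrow> continuous_on UNIV (Dl h js g)"
proof (induction js)
  case Nil then show ?case by simp
next
  case (Cons j r)
  have c: "continuous_on UNIV (Dl h r g)" using Cons by simp
  have "continuous_on UNIV (\<lambda>t. Dl h r g (t + h *\<^sub>R axis j 1))"
    by (rule continuous_on_compose2[OF c]) (auto intro!: continuous_intros)
  then show ?case using c by (simp add: continuous_on_diff)
qed

lemma content_box:
  fixes \<theta> :: "'n::finite \<Rightarrow> nat"
  shows "Henstock_Kurzweil_Integration.content (cbox (lo n \<alpha>) (lo n \<alpha> + wd \<theta> n)) = hh n ^ card {j. \<theta> j \<noteq> 0} * (2 * hh n) ^ (CARD('n) - card {j. \<theta> j \<noteq> 0})"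
proof -
  have ne: "cbox (lo n \<alpha>) (lo n \<alpha> + wd \<theta> n) \<noteq> {}"
    by (auto simp: interval_eq_empty_cart wd_def hh_def)
  have "Henstock_Kurzweil_Integration.content (cbox (lo n \<alpha>) (lo n \<alpha> + wd \<theta> n)) = (\<Prod>j\<in>UNIV. if \<theta> j = 0 then 2 * hh n else hh n)"
    using content_cbox_cart[OF ne] by (simp add: wd_def)
  also have "\<dots> = (2 * hh n) ^ card {j. \<theta> j = 0} * hh n ^ card {j. \<theta> j \<noteq> 0}"
    by (simp add: prod.If_cases Compl_eq)
  also have "card {j. \<theta> j = 0} = CARD('n) - card {j. \<theta> j \<noteq> 0}"
  proof -
    have "{j. \<theta> j = 0} = UNIV - {j. \<theta> j \<noteq> 0}" by auto
    then show ?thesis by (simp add: card_Diff_subset)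
  qed
  finally show ?thesis by simp
qed

lemma per_alpha:
  fixes f :: "real^'n::finite \<Rightarrow> real" and \<theta> :: "'n \<Rightarrow> nat" and xs0 :: "'n list"
  assumes th: "\<And>j. \<theta> j \<le> 1" and ck: "Ck (CARD('n) + 1) f"
    and xs: "distinct xs0" "set xs0 = {j. \<theta> j \<noteq> 0}" "length xs0 = mi_abs \<theta>"
    and mf: "mi_fact \<theta> = 1" and Dm: "Dmulti \<theta> f = pderiv_list xs0 f"
    and lip: "\<And>x y. \<bar>pderiv_list xs0 f x - pderiv_list xs0 f y\<bar> \<le> Lc * norm (x - y)" and Lc: "Lc \<ge> 0"
  shows "\<bar>(-1) ^ mi_abs \<theta> * 2 powr (real ((n + 2) * mi_abs \<theta>) + real n * real CARD('n) / 2)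
              * haar_coeff \<theta> n \<alpha> f - Dmulti \<theta> f (center n \<alpha>) / real (mi_fact \<theta>)\<bar>
         \<le> Lc * (2 * real CARD('n)) / 2 ^ n"
proof -
  define s where "s = CARD('n)"
  define m where "m = mi_abs \<theta>"
  define J where "J = {j. \<theta> j \<noteq> 0}"
  define P where "P = pderiv_list xs0 f"
  define e where "e = hh n"
  define a where "a = lo n \<alpha>"
  define b where "b = lo n \<alpha> + wd \<theta> n"
  define c where "c = center n \<alpha>"
  define js where "js = rev xs0"
  have cont: "continuous_on UNIV f" using ck unfolding Ck_def
    by (metis le0 list.size(3) pderiv_list.simps(1))
  have js: "distinct js" "set js = J" "length js = m" using xs unfolding js_def J_def m_def by auto
  have mJ: "card J = m" using xs distinct_card unfolding J_def m_def by metis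
  have ms: "m \<le> s" unfolding s_def using mJ card_mono[of UNIV J] by simp
  have e_pos: "e > 0" unfolding e_def hh_def by simp
  have e2: "2 * e = 1 / 2 ^ n" unfolding e_def hh_def by simp
  have haar: "haar_coeff \<theta> n \<alpha> f = 2 powr (real n * real s / 2) * ((-1) ^ m * integral (cbox a b) (Dl e js f))"
    unfolding haar_coeff_def haar_decomp[OF th cont js(1) js(2)[unfolded J_def]] s_def a_def b_def e_def js(3) ..
  have intD: "Dl e js f integrable_on cbox a b"
    by (rule integrable_continuous) (rule continuous_on_subset[OF Dl_cont[OF cont]], simp)
  define g where "g t = Dl e js f t - e ^ m * P c" for t
  have intg: "g integrable_on cbox a b" unfolding g_def by (intro integrable_diff intD integrable_const)
  define K where "K = Henstock_Kurzweil_Integration.content (cbox a b)"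
  have K: "K = e ^ m * (2 * e) ^ (s - m)" unfolding K_def a_def b_def e_def s_def
    using content_box[of n \<alpha> \<theta>] mJ unfolding J_def by simp
  have split: "integral (cbox a b) (Dl e js f) = integral (cbox a b) g + K * (e ^ m * P c)"
    unfolding g_def integral_diff[OF intD integrable_const] K_def by simp
  have ptw: "\<bar>g t\<bar> \<le> e ^ m * (Lc * (2 * real s / 2 ^ n))" if t: "t \<in> cbox a b" for t
  proof -
    have Hd: "Hd (length js) f" using Ck_Hd[OF ck] js ms unfolding s_def by simp
    obtain \<xi> where xi: "Dl e js f t = e ^ length js * pderiv_list (rev js) f \<xi>"
        "norm (\<xi> - t) \<le> real (length js) * e"
      using Dl_mvt[OF Hd, of e t] e_pos by auto
    have 1: "g t = e ^ m * (P \<xi> - P c)" using xi js unfolding g_def P_def js_def by (simp add: algebra_simps)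
    have tc: "\<bar>(t - c) $ j\<bar> \<le> 1 / 2 ^ n" for j
    proof -
      have cj: "c $ j = a $ j + e" unfolding c_def a_def center_def lo_def e_def hh_def by (simp add: field_simps)
      have tb: "a $ j \<le> t $ j \<and> t $ j \<le> b $ j" using t by (simp add: mem_box_cart)
      have "b $ j \<le> a $ j + 2 * e" using e_pos unfolding a_def b_def wd_def e_def by simp
      then have "a $ j \<le> t $ j \<and> t $ j \<le> a $ j + 2 * e" using tb by linarith
      then have "\<bar>t $ j - c $ j\<bar> \<le> e" using cj by auto
      then show ?thesis using e2 e_pos by simp
    qed
    have "norm (t - c) \<le> (\<Sum>j\<in>UNIV. \<bar>(t - c) $ j\<bar>)" by (rule norm_le_l1_cart)
    also have "\<dots> \<le> (\<Sum>j\<in>(UNIV::'n set). 1 / 2 ^ n)" by (rule sum_mono) (rule tc)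
    also have "\<dots> = real s / 2 ^ n" unfolding s_def by simp
    finally have n1: "norm (t - c) \<le> real s / 2 ^ n" .
    have "real m * e \<le> real s * (1 / 2 ^ n)"
      using ms e2 e_pos by (intro mult_mono) auto
    then have n2: "norm (\<xi> - t) \<le> real s / 2 ^ n" using xi(2) js by simp
    have "norm (\<xi> - c) \<le> norm (\<xi> - t) + norm (t - c)" using norm_triangle_ineq[of "\<xi> - t" "t - c"] by simp
    then have n3: "norm (\<xi> - c) \<le> 2 * real s / 2 ^ n" using n1 n2 by simp
    have "\<bar>P \<xi> - P c\<bar> \<le> Lc * (2 * real s / 2 ^ n)"
      using lip[of \<xi> c] n3 Lc unfolding P_def by (meson mult_left_mono order_trans)
    then have "e ^ m * \<bar>P \<xi> - P c\<bar> \<le> e ^ m * (Lc * (2 * real s / 2 ^ n))"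
      using e_pos by (intro mult_left_mono) auto
    then show ?thesis unfolding 1 abs_mult using e_pos by simp
  qed
  have bndI: "\<bar>integral (cbox a b) g\<bar> \<le> e ^ m * (Lc * (2 * real s / 2 ^ n)) * K"
    unfolding K_def
    using has_integral_bound[OF _ integrable_integral[OF intg], of "e ^ m * (Lc * (2 * real s / 2 ^ n))"] ptw e_pos Lc
    by simp
  define Z where "Z = 2 powr (real ((n + 2) * m) + real n * real s / 2) * 2 powr (real n * real s / 2)"
  have Z: "Z = 2 ^ ((n + 2) * m + n * s)"
  proof -
    have "Z = 2 powr (real ((n + 2) * m) + real n * real s / 2 + real n * real s / 2)"
      unfolding Z_def by (simp only: powr_add[symmetric] add.assoc)
    also have "real ((n + 2) * m) + real n * real s / 2 + real n * real s / 2 = real ((n + 2) * m + n * s)"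
      by simp
    also have "2 powr real ((n + 2) * m + n * s) = (2::real) ^ ((n + 2) * m + n * s)"
      by (rule powr_realpow) simp
    finally show ?thesis .
  qed
  have Zeq: "Z * (K * e ^ m) = 1"
  proof -
    obtain d where d: "s = m + d" using ms le_Suc_ex by blast
    have nat: "(n + 2) * m + n * s = Suc n * m + n * d + Suc n * m" unfolding d by (simp add: algebra_simps)
    have "Z = 2 ^ (Suc n * m) * 2 ^ (n * d) * 2 ^ (Suc n * m)" unfolding Z nat by (simp add: power_add)
    moreover have "K * e ^ m = (1 / 2 ^ Suc n) ^ m * (1 / 2 ^ n) ^ d * (1 / 2 ^ Suc n) ^ m"
      unfolding K e2 d by (simp add: e_def hh_def)
    ultimately show ?thesis by (simp add: power_add power_mult power_one_over)
  qed
  have sgn: "(-1::real) ^ m * (-1) ^ m = 1" by (simp add: power_mult_distrib[symmetric])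
  have X: "(-1) ^ m * 2 powr (real ((n + 2) * m) + real n * real s / 2) * haar_coeff \<theta> n \<alpha> f - P c
     = Z * integral (cbox a b) g"
  proof -
    have "(-1) ^ m * 2 powr (real ((n + 2) * m) + real n * real s / 2) * haar_coeff \<theta> n \<alpha> f
       = ((-1) ^ m * (-1) ^ m) * Z * (integral (cbox a b) g + K * (e ^ m * P c))"
      unfolding haar split Z_def by (simp add: algebra_simps)
    also have "\<dots> = Z * integral (cbox a b) g + (Z * (K * e ^ m)) * P c"
      unfolding sgn by (simp add: algebra_simps)
    finally show ?thesis unfolding Zeq by simp
  qed
  have Zpos: "Z > 0" unfolding Z by simp
  have "\<bar>Z * integral (cbox a b) g\<bar> \<le> Z * (e ^ m * (Lc * (2 * real s / 2 ^ n)) * K)"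
    unfolding abs_mult using Zpos bndI mult_left_mono[OF bndI, of Z] by simp
  also have "\<dots> = (Z * (K * e ^ m)) * (Lc * (2 * real s / 2 ^ n))" by (simp add: algebra_simps)
  also have "\<dots> = Lc * (2 * real s) / 2 ^ n" unfolding Zeq by simp
  finally show ?thesis using X unfolding m_def s_def P_def c_def Dm mf by simp
qed

theorem corollary3p3:
  fixes f :: "real^'n::finite \<Rightarrow> real" and \<theta> :: "'n \<Rightarrow> nat"
  assumes "Ck (CARD('n) + 1) f"
    and "\<And>k. 1 \<le> k \<Longrightarrow> k \<le> CARD('n) + 1 \<Longrightarrow> Dk_bounded k f"
    and "\<And>j. \<theta> j \<le> 1"
  shows "(\<lambda>n. SUP \<alpha>\<in>UNIV. ereal \<bar>(-1) ^ mi_abs \<theta>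
              * 2 powr (real ((n + 2) * mi_abs \<theta>) + real n * real CARD('n) / 2)
              * haar_coeff \<theta> n \<alpha> f
            - Dmulti \<theta> f (center n \<alpha>) / real (mi_fact \<theta>)\<bar>) \<longlonglongrightarrow> 0"
proof -
  note ck = assms(1) and th = assms(3)
  define s where "s = CARD('n)"
  define m where "m = mi_abs \<theta>"
  define J where "J = {j. \<theta> j \<noteq> 0}"
  define xs0 where "xs0 = (SOME xs. \<forall>i. count (mset xs) i = \<theta> i)"
  have cnt: "\<forall>i. count (mset xs0) i = \<theta> i"
    unfolding xs0_def by (rule someI_ex) (rule ex_list)
  have Dm: "Dmulti \<theta> f = pderiv_list xs0 f" unfolding Dmulti_def xs0_def ..
  have setx: "set xs0 = J"
  proof -
    have "a \<in> set xs0 \<longleftrightarrow> \<theta> a \<noteq> 0" for a using cnt count_mset_0_iff[of xs0 a] by metis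
    then show ?thesis unfolding J_def by auto
  qed
  have dist: "distinct xs0"
    unfolding distinct_count_atmost_1
  proof
    fix a
    show "count (mset xs0) a = (if a \<in> set xs0 then 1 else 0)"
      using cnt th[of a] setx unfolding J_def by auto
  qed
  have th01: "\<theta> j = (if j \<in> J then 1 else 0)" for j using th[of j] unfolding J_def by auto
  have mJ: "m = card J"
  proof -
    have "m = (\<Sum>j\<in>UNIV. if j \<in> J then 1 else 0)" unfolding m_def mi_abs_def using th01 by metis
    also have "\<dots> = card J" by (simp add: sum.If_cases)
    finally show ?thesis .
  qed
  have lenx: "length xs0 = m" using distinct_card[OF dist] setx mJ by simp
  have ms: "m \<le> s" unfolding s_def mJ by (rule card_mono) auto
  have mf: "mi_fact \<theta> = 1" unfolding mi_fact_def
    by (rule prod.neutral) (use th01 in auto)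
  define P where "P = pderiv_list xs0 f"
  have dP: "(\<lambda>t. P (x + t *\<^sub>R axis i 1)) differentiable (at 0)" for x i
    using ck lenx ms unfolding Ck_def P_def s_def by auto
  have bnds: "\<exists>Bi. \<forall>x. \<bar>pderiv_list (i # xs0) f x\<bar> \<le> Bi" for i
  proof -
    define \<gamma> where "\<gamma> j = \<theta> j + (if j = i then 1 else 0)" for j
    have ga: "mi_abs \<gamma> = m + 1" unfolding \<gamma>_def mi_abs_def m_def by (simp add: sum.distrib)
    have "Dk_bounded (m + 1) f" using assms(2) ms unfolding s_def by simp
    then obtain B where B: "\<And>x. \<bar>Dmulti \<gamma> f x / real (mi_fact \<gamma>)\<bar> \<le> B"
      unfolding Dk_bounded_def using ga by blast
    define ys where "ys = (SOME xs. \<forall>j. count (mset xs) j = \<gamma> j)"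
    have cy: "\<forall>j. count (mset ys) j = \<gamma> j" unfolding ys_def by (rule someI_ex) (rule ex_list)
    have Dg: "Dmulti \<gamma> f = pderiv_list ys f" unfolding Dmulti_def ys_def ..
    have mse: "mset (i # xs0) = mset ys"
      by (rule multiset_eqI) (simp add: cy cnt \<gamma>_def)
    have cl: "pderiv_list (i # xs0) f = pderiv_list ys f"
      by (rule clairaut[OF ck _ mse]) (use lenx ms s_def in simp)
    have fp: "real (mi_fact \<gamma>) > 0" unfolding mi_fact_def by (simp add: prod_pos)
    have "\<bar>pderiv_list (i # xs0) f x\<bar> \<le> B * real (mi_fact \<gamma>)" for x
    proof -
      have "\<bar>pderiv_list (i # xs0) f x\<bar> / real (mi_fact \<gamma>) \<le> B"
        using B[of x] fp unfolding cl Dg by (simp add: abs_divide)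
      then show ?thesis using pos_divide_le_eq[OF fp] by blast
    qed
    then show ?thesis by blast
  qed
  have "\<forall>i. \<exists>Bi. \<forall>x. \<bar>pderiv_list (i # xs0) f x\<bar> \<le> Bi" using bnds by blast
  from choice[OF this] obtain Bd where Bd': "\<forall>i. \<forall>x. \<bar>pderiv_list (i # xs0) f x\<bar> \<le> Bd i" by blast
  then have Bd: "\<And>i x. \<bar>pderiv_list (i # xs0) f x\<bar> \<le> Bd i" by blast
  define Lc where "Lc = (\<Sum>i\<in>UNIV. Bd i)"
  have Bd0: "Bd i \<ge> 0" for i using Bd[of i 0] by linarith
  have Lc0: "Lc \<ge> 0" unfolding Lc_def by (simp add: Bd0 sum_nonneg)
  have lip: "\<bar>P x - P y\<bar> \<le> Lc * norm (x - y)" for x y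
  proof -
    have "\<bar>P x - P y\<bar> \<le> (\<Sum>i\<in>UNIV. Bd i * \<bar>x$i - y$i\<bar>)"
      by (rule lip_coord[OF dP]) (metis P_def Bd pderiv_list.simps(2))
    also have "\<dots> \<le> (\<Sum>i\<in>UNIV. Bd i * norm (x - y))"
      by (rule sum_mono) (use Bd0 component_le_norm_cart[of "x - y"] in \<open>auto intro: mult_left_mono\<close>)
    also have "\<dots> = Lc * norm (x - y)" unfolding Lc_def by (simp add: sum_distrib_right)
    finally show ?thesis .
  qed
  define C where "C = Lc * (2 * real s)"
  define X where "X n \<alpha> = \<bar>(-1) ^ mi_abs \<theta>
              * 2 powr (real ((n + 2) * mi_abs \<theta>) + real n * real CARD('n) / 2)
              * haar_coeff \<theta> n \<alpha> f
            - Dmulti \<theta> f (center n \<alpha>) / real (mi_fact \<theta>)\<bar>" for n \<alpha>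
  have Xb: "X n \<alpha> \<le> C / 2 ^ n" for n \<alpha>
    unfolding X_def C_def s_def
    by (rule per_alpha[OF th ck dist setx[unfolded J_def] lenx[unfolded m_def] mf Dm lip[unfolded P_def] Lc0])
  have up: "(SUP \<alpha>\<in>UNIV. ereal (X n \<alpha>)) \<le> ereal (C / 2 ^ n)" for n
    using Xb by (simp add: SUP_le_iff)
  have lo0: "0 \<le> (SUP \<alpha>\<in>UNIV. ereal (X n \<alpha>))" for n
    by (rule SUP_upper2[of "\<lambda>_. 0"]) (auto simp: X_def)
  have "(\<lambda>n. C * (1 / 2) ^ n) \<longlonglongrightarrow> 0"
    by (intro tendsto_mult_right_zero LIMSEQ_realpow_zero) auto
  then have "(\<lambda>n. C / 2 ^ n) \<longlonglongrightarrow> 0" by (simp add: power_one_over)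
  then have lim: "(\<lambda>n. ereal (C / 2 ^ n)) \<longlonglongrightarrow> 0" using tendsto_ereal[of _ 0] zero_ereal_def by metis
  have "(\<lambda>n. SUP \<alpha>\<in>UNIV. ereal (X n \<alpha>)) \<longlonglongrightarrow> 0"
    by (rule tendsto_sandwich[OF _ _ tendsto_const lim]) (use up lo0 in auto)
  then show ?thesis unfolding X_def .
qed

end
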